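(* Let $B\in\mathbb{R}^{n\times n}$ be symmetric, partitioned into $p\times p$ blocks $B_{st}\in\mathbb{R}^{n_s\times n_t}$. Let $\check B$ be its strictly block lower triangular part ($\check B_{st}=B_{st}$ if $s>t$, $0$ otherwise) and $\hat B$ its strictly block upper triangular part ($\hat B_{st}=B_{st}$ if $s<t$, $0$ otherwise). Then for every $\eta\in\mathbb{C}^n$ with $\|\eta\|=1$, $$-\rho(B)\le\mathrm{Re}(\eta^H\check B\eta)\le\rho(B)\quad\text{and}\quad -\rho(B)\le\mathrm{Re}(\eta^H\hat B\eta)\le\rho(B).$$
   Context: $n_1,\dots,n_p$ are positive integers with $\sum_sn_s=n$. $\rho(B)$ is the spectral radius of $B$, and $\eta^H$ is the conjugate transpose. *)

theory Defs
  imports "Jordan_Normal_Form.Spectral_Radius"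
begin

text \<open>Block index (0-based) of row/column index i for block sizes ns = [n_1,...,n_p]:
  the unique s with n_1+...+n_s \<le> i < n_1+...+n_(s+1).\<close>
definition block_of :: "nat list \<Rightarrow> nat \<Rightarrow> nat" where
  "block_of ns i = (LEAST s. i < sum_list (take (Suc s) ns))"

definition block_lower :: "nat list \<Rightarrow> real mat \<Rightarrow> real mat" where
  "block_lower ns B = mat (dim_row B) (dim_col B)
     (\<lambda>(i,j). if block_of ns i > block_of ns j then B $$ (i,j) else 0)"

definition block_upper :: "nat list \<Rightarrow> real mat \<Rightarrow> real mat" where
  "block_upper ns B = mat (dim_row B) (dim_col B)
     (\<lambda>(i,j). if block_of ns i < block_of ns j then B $$ (i,j) else 0)"

definition herm_form :: "real mat \<Rightarrow> complex vec \<Rightarrow> complex" where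
  "herm_form M v = (\<Sum>i<dim_vec v. \<Sum>j<dim_vec v. cnj (v $ i) * complex_of_real (M $$ (i,j)) * v $ j)"

end

theory Submission
  imports Defs
begin


lemma smult_pow_mat:
  assumes "A \<in> carrier_mat n n"
  shows "(c \<cdot>\<^sub>m A) ^\<^sub>m k = (c ^ k) \<cdot>\<^sub>m (A ^\<^sub>m k :: 'a :: comm_semiring_1 mat)"
proof (induct k)
  case 0 then show ?case using assms by (auto intro!: eq_matI)
next
  case (Suc k)
  have "(c \<cdot>\<^sub>m A) ^\<^sub>m Suc k = (c ^ k \<cdot>\<^sub>m A ^\<^sub>m k) * (c \<cdot>\<^sub>m A)" using Suc by simp
  also have "\<dots> = c ^ k \<cdot>\<^sub>m (A ^\<^sub>m k * (c \<cdot>\<^sub>m A))"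
    using assms by (intro mult_smult_assoc_mat) auto
  also have "A ^\<^sub>m k * (c \<cdot>\<^sub>m A) = c \<cdot>\<^sub>m (A ^\<^sub>m k * A)"
    using assms by (intro mult_smult_distrib) auto
  finally show ?case by (auto intro!: eq_matI simp: ac_simps)
qed

lemma map_pow_real:
  assumes "B \<in> carrier_mat n n"
  shows "map_mat complex_of_real (B ^\<^sub>m k) = (map_mat complex_of_real B) ^\<^sub>m k"
  proof (induct k)
  case (Suc k) thus ?case using assms by (auto intro!: eq_matI simp: scalar_prod_def Suc[symmetric])
qed (auto intro!: eq_matI)

lemma power_entry_bound:
  fixes B :: "real mat"
  assumes B: "B \<in> carrier_mat n n" and n: "n > 0"
    and r: "r > spectral_radius (map_mat complex_of_real B)" and r0: "r > 0"
  shows "\<exists>c. \<forall>k i j. i < n \<longrightarrow> j < n \<longrightarrow> \<bar>(B ^\<^sub>m k) $$ (i,j)\<bar> \<le> c * r ^ k"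
proof -
  let ?A = "map_mat complex_of_real B"
  define A' where "A' = complex_of_real (1/r) \<cdot>\<^sub>m ?A"
  have A: "?A \<in> carrier_mat n n" using B by auto
  have A': "A' \<in> carrier_mat n n" using A unfolding A'_def by auto
  have "spectral_radius A' < 1"
  proof -
    from spectral_radius_mem_max(1)[OF A' n] obtain ev where
      ev: "ev \<in> spectrum A'" and eq: "spectral_radius A' = norm ev" by auto
    from ev obtain v where v: "eigenvector A' v ev" unfolding spectrum_def eigenvalue_def by auto
    hence vc: "v \<in> carrier_vec n" and v0: "v \<noteq> 0\<^sub>v n" and Av: "A' *\<^sub>v v = ev \<cdot>\<^sub>v v"
      using A' unfolding eigenvector_def by auto
    have "?A *\<^sub>v v = (complex_of_real r * ev) \<cdot>\<^sub>v v"
    proof (rule eq_vecI)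
      fix i assume i: "i < dim_vec ((complex_of_real r * ev) \<cdot>\<^sub>v v)"
      have "(A' *\<^sub>v v) $ i = (ev \<cdot>\<^sub>v v) $ i" using Av by simp
      then have "complex_of_real (1/r) * (?A *\<^sub>v v) $ i = ev * v $ i"
        using i A vc unfolding A'_def
        by (auto simp: mult_mat_vec_def scalar_prod_def sum_distrib_left ac_simps)
      then show "(?A *\<^sub>v v) $ i = ((complex_of_real r * ev) \<cdot>\<^sub>v v) $ i"
        using i vc r0 by (auto simp: field_simps)
    qed (use A vc in auto)
    then have "eigenvector ?A v (complex_of_real r * ev)"
      using vc v0 A unfolding eigenvector_def by auto
    then have "norm (complex_of_real r * ev) \<in> norm ` spectrum ?A"
      unfolding spectrum_def eigenvalue_def by auto
    from spectral_radius_mem_max(2)[OF A n this] r r0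
    have "r * norm ev \<le> spectral_radius ?A" using r0 by (simp add: norm_mult)
    with r have "r * norm ev < r * 1" by linarith
    then show ?thesis using eq r0 by (simp only: mult_less_cancel_left_pos)
  qed
  from spectral_radius_jnf_norm_bound_less_1_upper_triangular[OF A' this]
  obtain c where c: "\<And>k. norm_bound (A' ^\<^sub>m k) c" by auto
  show ?thesis
  proof (intro exI allI impI)
    fix k i j assume i: "i < n" and j: "j < n"
    have "A' ^\<^sub>m k = complex_of_real (1/r) ^ k \<cdot>\<^sub>m map_mat complex_of_real (B ^\<^sub>m k)"
      unfolding A'_def smult_pow_mat[OF A] map_pow_real[OF B] ..
    then have "(A' ^\<^sub>m k) $$ (i,j) = complex_of_real ((1/r) ^ k * (B ^\<^sub>m k) $$ (i,j))"
      using i j B by simp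
    moreover have "norm ((A' ^\<^sub>m k) $$ (i,j)) \<le> c" using c[of k] i j A' unfolding norm_bound_def by auto
    ultimately have "\<bar>(1/r) ^ k * (B ^\<^sub>m k) $$ (i,j)\<bar> \<le> c" by (metis norm_of_real)
    then have "\<bar>(B ^\<^sub>m k) $$ (i,j)\<bar> / r ^ k \<le> c" using r0 by (simp add: abs_mult power_divide)
    then show "\<bar>(B ^\<^sub>m k) $$ (i,j)\<bar> \<le> c * r ^ k" using r0 by (simp add: divide_le_eq)
  qed
qed



lemma cs_sum:
  fixes x y :: "nat \<Rightarrow> real"
  shows "(\<Sum>i<n. x i * y i)^2 \<le> (\<Sum>i<n. x i * x i) * (\<Sum>i<n. y i * y i)"
proof -
  have "0 \<le> (\<Sum>i<n. \<Sum>j<n. (x i * y j - x j * y i)^2)" by (intro sum_nonneg) auto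
  also have "\<dots> = (\<Sum>i<n. \<Sum>j<n. (x i * x i) * (y j * y j) + (x j * x j) * (y i * y i)
        - 2 * ((x i * y i) * (x j * y j)))"
    by (intro sum.cong refl) (simp add: power2_eq_square algebra_simps)
  also have "\<dots> = (\<Sum>i<n. \<Sum>j<n. (x i * x i) * (y j * y j)) + (\<Sum>i<n. \<Sum>j<n. (x j * x j) * (y i * y i))
        - 2 * (\<Sum>i<n. \<Sum>j<n. (x i * y i) * (x j * y j))"
    by (simp add: sum_subtractf sum.distrib sum_distrib_left)
  also have "(\<Sum>i<n. \<Sum>j<n. (x i * x i) * (y j * y j)) = (\<Sum>i<n. x i * x i) * (\<Sum>i<n. y i * y i)"
    by (simp add: sum_product)
  also have "(\<Sum>i<n. \<Sum>j<n. (x j * x j) * (y i * y i)) = (\<Sum>i<n. x i * x i) * (\<Sum>i<n. y i * y i)"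
    by (subst sum.swap) (simp add: sum_product)
  also have "(\<Sum>i<n. \<Sum>j<n. (x i * y i) * (x j * y j)) = (\<Sum>i<n. x i * y i)^2"
    by (simp add: sum_product power2_eq_square)
  finally show ?thesis by simp
qed

lemma growth:
  fixes s :: "nat \<Rightarrow> real"
  assumes nn: "\<And>m. s m \<ge> 0" and lc: "\<And>m. (s (Suc m))^2 \<le> s m * s (Suc (Suc m))"
    and s0: "s 0 > 0" and bd: "\<And>m. s m \<le> K * R ^ m" and R: "R > 0"
  shows "s 1 \<le> R * s 0"
proof (rule ccontr)
  assume "\<not> ?thesis"
  then have gt: "s 1 > R * s 0" by simp
  define t where "t = s 1 / s 0"
  have t: "t > R" using gt s0 unfolding t_def by (simp add: field_simps)
  have tpos: "t > 0" using t R by simp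
  have step: "t * s m \<le> s (Suc m) \<and> s m > 0" for m
  proof (induct m)
    case 0 then show ?case using s0 unfolding t_def by simp
  next
    case (Suc m)
    then have a: "t * s m \<le> s (Suc m)" and b: "s m > 0" by auto
    have c: "s (Suc m) > 0" using a b tpos by (smt (verit) mult_pos_pos)
    have "t * s m * s (Suc m) \<le> s (Suc m) * s (Suc m)" using a c by (simp add: mult_right_mono)
    also have "\<dots> \<le> s m * s (Suc (Suc m))" using lc[of m] by (simp add: power2_eq_square)
    finally have "s m * (t * s (Suc m)) \<le> s m * s (Suc (Suc m))" by (simp add: ac_simps)
    then have "t * s (Suc m) \<le> s (Suc (Suc m))" using b by simp
    then show ?case using c by simp
  qed
  have pw: "t ^ m * s 0 \<le> s m" for m
  proof (induct m)
    case (Suc m)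
    have "t ^ Suc m * s 0 = t * (t ^ m * s 0)" by simp
    also have "\<dots> \<le> t * s m" using Suc tpos by (simp add: mult_left_mono)
    also have "\<dots> \<le> s (Suc m)" using step[of m] by simp
    finally show ?case .
  qed simp
  have "1 < t / R" using t R by simp
  from real_arch_pow[OF this] obtain m where m: "K / s 0 < (t / R) ^ m" by blast
  have "t ^ m * s 0 \<le> K * R ^ m" using pw[of m] bd[of m] by linarith
  then have "(t / R) ^ m \<le> K / s 0" using s0 R by (simp add: power_divide field_simps)
  with m show False by simp
qed



definition bv :: "real mat \<Rightarrow> nat \<Rightarrow> (nat \<Rightarrow> real) \<Rightarrow> nat \<Rightarrow> real" where
  "bv B n x i = (\<Sum>j<n. B $$ (i,j) * x j)"

definition ip :: "nat \<Rightarrow> (nat \<Rightarrow> real) \<Rightarrow> (nat \<Rightarrow> real) \<Rightarrow> real" where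
  "ip n x y = (\<Sum>i<n. x i * y i)"

lemma sym_entry:
  assumes "B \<in> carrier_mat n n" "transpose_mat B = B" "i < n" "j < n"
  shows "B $$ (i,j) = B $$ (j,i)"
proof -
  have "transpose_mat B $$ (j,i) = B $$ (i,j)" using assms(1,3,4) by simp
  then show ?thesis using assms(2) by simp
qed

lemma ip_sym:
  assumes "B \<in> carrier_mat n n" "transpose_mat B = B"
  shows "ip n (bv B n x) y = ip n x (bv B n y)"
proof -
  have "ip n (bv B n x) y = (\<Sum>i<n. \<Sum>j<n. B $$ (i,j) * x j * y i)"
    unfolding ip_def bv_def by (simp add: sum_distrib_right)
  also have "\<dots> = (\<Sum>j<n. \<Sum>i<n. B $$ (j,i) * x j * y i)"
    by (subst sum.swap) (intro sum.cong refl, simp add: sym_entry[OF assms])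
  also have "\<dots> = ip n x (bv B n y)"
    unfolding ip_def bv_def by (simp add: sum_distrib_left ac_simps)
  finally show ?thesis .
qed

lemma pow_comm:
  assumes "B \<in> carrier_mat n n"
  shows "B ^\<^sub>m k * B = B * B ^\<^sub>m k"
proof (induct k)
  case 0 then show ?case using assms by simp
next
  case (Suc k)
  have "B ^\<^sub>m Suc k * B = (B ^\<^sub>m k * B) * B" by simp
  also have "\<dots> = (B * B ^\<^sub>m k) * B" using Suc by simp
  also have "\<dots> = B * (B ^\<^sub>m k * B)" using assms by (intro assoc_mult_mat) auto
  finally show ?case by simp
qed

lemma iter_pow:
  assumes B: "B \<in> carrier_mat n n" and i: "i < n"
  shows "((bv B n) ^^ m) x i = (\<Sum>j<n. (B ^\<^sub>m m) $$ (i,j) * x j)"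
  using i
proof (induct m arbitrary: i)
  case 0
  have "(\<Sum>j<n. (1\<^sub>m n) $$ (i,j) * x j) = (\<Sum>j\<in>{..<n}. if i = j then x j else 0)"
    using 0 by (intro sum.cong) auto
  then show ?case using B 0 by simp
next
  case (Suc m)
  have "((bv B n) ^^ Suc m) x i = bv B n ((bv B n ^^ m) x) i" by simp
  also have "\<dots> = (\<Sum>k<n. B $$ (i,k) * (\<Sum>j<n. (B ^\<^sub>m m) $$ (k,j) * x j))"
    unfolding bv_def[of B n "(bv B n ^^ m) x" i] by (intro sum.cong refl) (simp add: Suc.hyps)
  also have "\<dots> = (\<Sum>j<n. (\<Sum>k<n. B $$ (i,k) * (B ^\<^sub>m m) $$ (k,j)) * x j)"
    by (simp add: sum_distrib_left sum_distrib_right ac_simps) (rule sum.swap)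
  also have "\<dots> = (\<Sum>j<n. (B * B ^\<^sub>m m) $$ (i,j) * x j)"
    using B Suc by (intro sum.cong refl) (auto simp: scalar_prod_def atLeast0LessThan)
  also have "B * B ^\<^sub>m m = B ^\<^sub>m Suc m" using pow_comm[OF B] by simp
  finally show ?case .
qed



lemma rayleigh_r:
  assumes B: "B \<in> carrier_mat n n" and sym: "transpose_mat B = B" and n: "n > 0"
    and r: "r > spectral_radius (map_mat complex_of_real B)" and r0: "r > 0"
  shows "\<bar>ip n x (bv B n x)\<bar> \<le> r * ip n x x"
proof -
  obtain c where c: "\<And>k i j. i < n \<Longrightarrow> j < n \<Longrightarrow> \<bar>(B ^\<^sub>m k) $$ (i,j)\<bar> \<le> c * r ^ k"
    using power_entry_bound[OF B n r r0] by blast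
  define v where "v m = ((bv B n) ^^ m) x" for m
  define s where "s m = ip n (v m) (v m)" for m
  have vS: "v (Suc m) = bv B n (v m)" for m unfolding v_def by simp
  have nn: "s m \<ge> 0" for m unfolding s_def ip_def by (intro sum_nonneg) auto
  have lc: "(s (Suc m))^2 \<le> s m * s (Suc (Suc m))" for m
  proof -
    have "s (Suc m) = ip n (v m) (v (Suc (Suc m)))"
      unfolding s_def vS[of "Suc m"] by (subst vS) (rule ip_sym[OF B sym])
    then show ?thesis unfolding s_def[of m] s_def[of "Suc (Suc m)"] ip_def by (simp add: cs_sum)
  qed
  define U where "U = (\<Sum>j<n. \<bar>x j\<bar>)"
  have vb: "\<bar>v m i\<bar> \<le> c * r ^ m * U" if i: "i < n" for m i
  proof -
    have "\<bar>v m i\<bar> = \<bar>\<Sum>j<n. (B ^\<^sub>m m) $$ (i,j) * x j\<bar>" unfolding v_def using iter_pow[OF B i] by simp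
    also have "\<dots> \<le> (\<Sum>j<n. \<bar>(B ^\<^sub>m m) $$ (i,j)\<bar> * \<bar>x j\<bar>)"
      by (rule order_trans[OF sum_abs]) (simp add: abs_mult)
    also have "\<dots> \<le> (\<Sum>j<n. c * r ^ m * \<bar>x j\<bar>)"
      by (intro sum_mono mult_right_mono c i) auto
    also have "\<dots> = c * r ^ m * U" unfolding U_def by (simp add: sum_distrib_left)
    finally show ?thesis .
  qed
  have bd: "s m \<le> (real n * (c * U)^2) * (r^2) ^ m" for m
  proof -
    have "s m \<le> (\<Sum>i<n. (c * r ^ m * U)^2)" unfolding s_def ip_def
    proof (intro sum_mono)
      fix i assume "i \<in> {..<n}"
      then have "\<bar>v m i\<bar> \<le> c * r ^ m * U" using vb by auto
      then have "\<bar>v m i\<bar>^2 \<le> (c * r ^ m * U)^2" by (intro power_mono) auto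
      then show "v m i * v m i \<le> (c * r ^ m * U)^2" by (simp add: power2_eq_square)
    qed
    also have "\<dots> = (real n * (c * U)^2) * (r^2) ^ m" by (simp add: power_mult_distrib flip: power_mult) (simp add: mult.commute)
    finally show ?thesis .
  qed
  show ?thesis
  proof (cases "s 0 = 0")
    case True
    then have "\<forall>i\<in>{..<n}. x i * x i = 0" unfolding s_def ip_def v_def
      by (subst sum_nonneg_eq_0_iff[symmetric]) auto
    then have "ip n x (bv B n x) = 0" unfolding ip_def by (intro sum.neutral) auto
    then show ?thesis using True r0 unfolding s_def v_def by simp
  next
    case False
    then have s0: "s 0 > 0" using nn[of 0] by simp
    have "s 1 \<le> r^2 * s 0" by (rule growth[OF nn lc s0 bd]) (use r0 in simp)
    have "(ip n x (bv B n x))^2 \<le> s 0 * s 1"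
      unfolding s_def ip_def v_def by (simp add: cs_sum)
    also have "\<dots> \<le> s 0 * (r^2 * s 0)" using \<open>s 1 \<le> r^2 * s 0\<close> s0 by simp
    also have "\<dots> = (r * ip n x x)^2" unfolding s_def v_def by (simp add: power2_eq_square)
    finally have "\<bar>ip n x (bv B n x)\<bar>^2 \<le> (r * ip n x x)^2" by simp
    moreover have "0 \<le> r * ip n x x" using r0 nn[of 0] unfolding s_def v_def by simp
    ultimately show ?thesis by (rule power2_le_imp_le)
  qed
qed

lemma rayleigh:
  assumes B: "B \<in> carrier_mat n n" and sym: "transpose_mat B = B"
  shows "\<bar>ip n x (bv B n x)\<bar> \<le> spectral_radius (map_mat complex_of_real B) * ip n x x"
proof (cases "n = 0")
  case True then show ?thesis by (simp add: ip_def)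
next
  case False
  then have n: "n > 0" by simp
  let ?r = "spectral_radius (map_mat complex_of_real B)"
  have A: "map_mat complex_of_real B \<in> carrier_mat n n" using B by simp
  have r0: "?r \<ge> 0" using spectral_radius_mem_max(1)[OF A n] by auto
  have s0: "ip n x x \<ge> 0" unfolding ip_def by (intro sum_nonneg) auto
  show ?thesis
  proof (rule ccontr)
    assume "\<not> ?thesis"
    then have gt: "\<bar>ip n x (bv B n x)\<bar> > ?r * ip n x x" by simp
    have "\<bar>ip n x (bv B n x)\<bar> \<le> (?r + 1) * ip n x x"
      by (rule rayleigh_r[OF B sym n]) (use r0 in auto)
    with gt have sp: "ip n x x > 0" using s0 by (cases "ip n x x = 0") auto
    define r where "r = ?r + (\<bar>ip n x (bv B n x)\<bar> - ?r * ip n x x) / (2 * ip n x x)"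
    have "r > ?r" unfolding r_def using gt sp by simp
    then have "\<bar>ip n x (bv B n x)\<bar> \<le> r * ip n x x"
      by (intro rayleigh_r[OF B sym n]) (use r0 in auto)
    also have "r * ip n x x = ?r * ip n x x + (\<bar>ip n x (bv B n x)\<bar> - ?r * ip n x x) / 2"
      unfolding r_def using sp by (simp add: field_simps)
    finally show False using gt by (simp add: field_simps)
  qed
qed



lemma Q_expand: "ip n x (bv B n x) = (\<Sum>i<n. \<Sum>j<n. B $$ (i,j) * (x i * x j))"
  unfolding ip_def bv_def by (simp add: sum_distrib_left ac_simps)

lemma block_part_bound:
  fixes b :: "nat \<Rightarrow> nat" and u w :: "nat \<Rightarrow> real"
  assumes B: "B \<in> carrier_mat n n" and sym: "transpose_mat B = B"
    and nrm: "ip n u u + ip n w w = 1"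
  defines "F \<equiv> \<lambda>i j. B $$ (i,j) * (u i * u j + w i * w j)"
  shows "\<bar>\<Sum>i<n. \<Sum>j<n. if b j < b i then F i j else 0\<bar> \<le> spectral_radius (map_mat complex_of_real B)"
    and "\<bar>\<Sum>i<n. \<Sum>j<n. if b i < b j then F i j else 0\<bar> \<le> spectral_radius (map_mat complex_of_real B)"
proof -
  let ?r = "spectral_radius (map_mat complex_of_real B)"
  define L where "L = (\<Sum>i<n. \<Sum>j<n. if b j < b i then F i j else 0)"
  define U where "U = (\<Sum>i<n. \<Sum>j<n. if b i < b j then F i j else 0)"
  define E where "E = (\<Sum>i<n. \<Sum>j<n. if b i = b j then F i j else 0)"
  define Al where "Al = (\<Sum>i<n. \<Sum>j<n. F i j)"
  have Fsym: "F i j = F j i" if "i < n" "j < n" for i j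
    unfolding F_def using sym_entry[OF B sym that] by (simp add: ac_simps)
  have LU: "L = U" unfolding L_def U_def
    by (subst sum.swap) (intro sum.cong refl, auto simp: Fsym)
  have "Al = L + U + E" unfolding Al_def L_def U_def E_def
    by (simp only: sum.distrib[symmetric]) (intro sum.cong refl, auto)
  have Al: "Al = ip n u (bv B n u) + ip n w (bv B n w)"
    unfolding Al_def F_def Q_expand by (simp only: sum.distrib[symmetric] distrib_left)
  define S where "S = b ` {..<n}"
  define ch where "ch s x i = (if b i = s then x i else (0::real))" for s x i
  have chQ: "(\<Sum>s\<in>S. ip n (ch s x) (bv B n (ch s x))) =
      (\<Sum>i<n. \<Sum>j<n. if b i = b j then B $$ (i,j) * (x i * x j) else 0)" for x
  proof -
    have "(\<Sum>s\<in>S. ip n (ch s x) (bv B n (ch s x))) =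
        (\<Sum>s\<in>S. \<Sum>i<n. \<Sum>j<n. if b i = s \<and> b j = s then B $$ (i,j) * (x i * x j) else 0)"
      unfolding Q_expand ch_def by (intro sum.cong refl) auto
    also have "\<dots> = (\<Sum>i<n. \<Sum>j<n. \<Sum>s\<in>S. if b i = s \<and> b j = s then B $$ (i,j) * (x i * x j) else 0)"
      by (subst sum.swap) (rule sum.cong[OF refl], rule sum.swap)
    also have "\<dots> = (\<Sum>i<n. \<Sum>j<n. if b i = b j then B $$ (i,j) * (x i * x j) else 0)"
    proof (intro sum.cong refl)
      fix i j assume i: "i \<in> {..<n}" and j: "j \<in> {..<n}"
      have bi: "b i \<in> S" using i unfolding S_def by auto
      have "(\<Sum>s\<in>S. if b i = s \<and> b j = s then B $$ (i,j) * (x i * x j) else 0)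
          = (\<Sum>s\<in>S. if b i = s then (if b i = b j then B $$ (i,j) * (x i * x j) else 0) else 0)"
        by (intro sum.cong refl) auto
      also have "\<dots> = (if b i = b j then B $$ (i,j) * (x i * x j) else 0)"
        using bi unfolding S_def by (simp add: sum.delta)
      finally show "(\<Sum>s\<in>S. if b i = s \<and> b j = s then B $$ (i,j) * (x i * x j) else 0)
          = (if b i = b j then B $$ (i,j) * (x i * x j) else 0)" .
    qed
    finally show ?thesis .
  qed
  have chN: "(\<Sum>s\<in>S. ip n (ch s x) (ch s x)) = ip n x x" for x
  proof -
    have "(\<Sum>s\<in>S. ip n (ch s x) (ch s x)) = (\<Sum>i<n. \<Sum>s\<in>S. if b i = s then x i * x i else 0)"
      unfolding ip_def ch_def by (subst sum.swap) (intro sum.cong refl, auto)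
    also have "\<dots> = (\<Sum>i<n. x i * x i)"
      by (intro sum.cong refl) (auto simp: S_def sum.delta)
    finally show ?thesis unfolding ip_def .
  qed
  have E: "E = (\<Sum>s\<in>S. ip n (ch s u) (bv B n (ch s u)) + ip n (ch s w) (bv B n (ch s w)))"
    unfolding sum.distrib chQ E_def F_def
    by (simp only: sum.distrib[symmetric]) (intro sum.cong refl, simp add: distrib_left)
  have rb: "\<bar>ip n x (bv B n x)\<bar> \<le> ?r * ip n x x" for x by (rule rayleigh[OF B sym])
  have "\<bar>E\<bar> \<le> (\<Sum>s\<in>S. \<bar>ip n (ch s u) (bv B n (ch s u)) + ip n (ch s w) (bv B n (ch s w))\<bar>)"
    unfolding E by (rule sum_abs)
  also have "\<dots> \<le> (\<Sum>s\<in>S. ?r * ip n (ch s u) (ch s u) + ?r * ip n (ch s w) (ch s w))"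
    by (intro sum_mono order_trans[OF abs_triangle_ineq] add_mono rb)
  also have "\<dots> = ?r * (ip n u u + ip n w w)"
    by (simp add: sum.distrib sum_distrib_left[symmetric] chN distrib_left)
  finally have Eb: "\<bar>E\<bar> \<le> ?r" using nrm by simp
  have "\<bar>Al\<bar> \<le> ?r * ip n u u + ?r * ip n w w"
    unfolding Al by (intro order_trans[OF abs_triangle_ineq] add_mono rb)
  then have Ab: "\<bar>Al\<bar> \<le> ?r" using nrm by (simp add: distrib_left[symmetric])
  have "L = (Al - E) / 2" using \<open>Al = L + U + E\<close> LU by simp
  then have "\<bar>L\<bar> \<le> ?r" using Eb Ab by (simp add: abs_le_iff)
  then show "\<bar>\<Sum>i<n. \<Sum>j<n. if b j < b i then F i j else 0\<bar> \<le> ?r" unfolding L_def .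
  show "\<bar>\<Sum>i<n. \<Sum>j<n. if b i < b j then F i j else 0\<bar> \<le> ?r" using \<open>\<bar>L\<bar> \<le> ?r\<close> LU unfolding U_def by simp
qed



lemma Re_herm:
  assumes "M \<in> carrier_mat n n" "dim_vec v = n"
  shows "Re (herm_form M v) = (\<Sum>i<n. \<Sum>j<n. M $$ (i,j) *
     (Re (v $ i) * Re (v $ j) + Im (v $ i) * Im (v $ j)))"
  unfolding herm_form_def assms(2) Re_sum
  by (intro sum.cong refl) (simp add: algebra_simps)

theorem lemma11:
  fixes B :: "real mat" and ns :: "nat list" and n :: nat and \<eta> :: "complex vec"
  assumes "B \<in> carrier_mat n n"
    and "transpose_mat B = B"
    and "\<forall>s\<in>set ns. s > 0"
    and "sum_list ns = n"
    and "dim_vec \<eta> = n"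
    and "sqrt (\<Sum>i<n. (cmod (\<eta> $ i))\<^sup>2) = 1"
  shows "- spectral_radius (map_mat complex_of_real B) \<le> Re (herm_form (block_lower ns B) \<eta>)
       \<and> Re (herm_form (block_lower ns B) \<eta>) \<le> spectral_radius (map_mat complex_of_real B)
       \<and> - spectral_radius (map_mat complex_of_real B) \<le> Re (herm_form (block_upper ns B) \<eta>)
       \<and> Re (herm_form (block_upper ns B) \<eta>) \<le> spectral_radius (map_mat complex_of_real B)"
proof -
  define u where "u i = Re (\<eta> $ i)" for i
  define w where "w i = Im (\<eta> $ i)" for i
  define F where "F = (\<lambda>i j. B $$ (i,j) * (u i * u j + w i * w j))"
  let ?b = "block_of ns"
  have B: "B \<in> carrier_mat n n" by fact
  have "(\<Sum>i<n. (cmod (\<eta> $ i))\<^sup>2) = 1" using assms(6)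
    by (metis real_sqrt_eq_1_iff)
  moreover have "ip n u u + ip n w w = (\<Sum>i<n. (cmod (\<eta> $ i))\<^sup>2)"
    unfolding ip_def u_def w_def sum.distrib[symmetric]
    by (intro sum.cong refl) (subst cmod_power2, simp add: power2_eq_square)
  ultimately have nrm: "ip n u u + ip n w w = 1" by simp
  have bl: "block_lower ns B \<in> carrier_mat n n" "block_upper ns B \<in> carrier_mat n n"
    using B unfolding block_lower_def block_upper_def by auto
  have L: "Re (herm_form (block_lower ns B) \<eta>) = (\<Sum>i<n. \<Sum>j<n. if ?b j < ?b i then F i j else 0)"
    unfolding Re_herm[OF bl(1) assms(5)] F_def u_def w_def
    using B by (intro sum.cong refl) (auto simp: block_lower_def)
  have U: "Re (herm_form (block_upper ns B) \<eta>) = (\<Sum>i<n. \<Sum>j<n. if ?b i < ?b j then F i j else 0)"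
    unfolding Re_herm[OF bl(2) assms(5)] F_def u_def w_def
    using B by (intro sum.cong refl) (auto simp: block_upper_def)
  from block_part_bound[OF B assms(2) nrm, of ?b] show ?thesis
    unfolding L U F_def by (simp add: abs_le_iff)
qed

end
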